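(* Let $\Omega$ be a finite set and let $p,q$ be probability distributions on $\Omega$. Let $X_1,X_2$ be drawn i.i.d. from $p$ and $\mathcal{S}=\{X_1,X_2\}$, and let $P^\star(\mathrm{acc})$ be the supremum of $\Pr(Z\in\mathcal{S})$ over all valid token-level selection rules with output $Z$. Then $$P^\star(\mathrm{acc})=\min_{\mathcal{A}\subseteq\Omega}\Big\{\sum_{s\in\mathcal{A}}q(s)+\Big(\sum_{s\in\mathcal{A}^c}p(s)\Big)^2+2\Big(\sum_{s\in\mathcal{A}}p(s)\Big)\Big(\sum_{s\in\mathcal{A}^c}p(s)\Big)\Big\},$$ where $\mathcal{A}^c=\Omega\setminus\mathcal{A}$.
   Context: A token-level selection rule is a conditional distribution $\mathcal{P}(\cdot\mid X_1,X_2)$ on $\Omega$; it is valid if its output $Z$ satisfies $\Pr(Z=z)=q(z)$ for all $z\in\Omega$, where $X_1,X_2$ are i.i.d. with law $p$. *)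

theory Defs
  imports "HOL-Probability.Probability"
begin

text \<open>A token-level selection rule is a Markov kernel K x1 x2 (a distribution on the
  finite token set, the type 'a). Its output law, when X1, X2 are i.i.d. with law p.\<close>

definition output_prob :: "'a::finite pmf \<Rightarrow> ('a \<Rightarrow> 'a \<Rightarrow> 'a pmf) \<Rightarrow> 'a \<Rightarrow> real" where
  "output_prob p K z = (\<Sum>x1\<in>UNIV. \<Sum>x2\<in>UNIV. pmf p x1 * pmf p x2 * pmf (K x1 x2) z)"

definition valid_rule :: "'a::finite pmf \<Rightarrow> 'a pmf \<Rightarrow> ('a \<Rightarrow> 'a \<Rightarrow> 'a pmf) \<Rightarrow> bool" where
  "valid_rule p q K \<longleftrightarrow> (\<forall>z. output_prob p K z = pmf q z)"

definition accept_prob :: "'a::finite pmf \<Rightarrow> ('a \<Rightarrow> 'a \<Rightarrow> 'a pmf) \<Rightarrow> real" where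
  "accept_prob p K = (\<Sum>x1\<in>UNIV. \<Sum>x2\<in>UNIV.
      pmf p x1 * pmf p x2 * measure_pmf.prob (K x1 x2) {x1, x2})"

definition opt_accept :: "'a::finite pmf \<Rightarrow> 'a pmf \<Rightarrow> real" where
  "opt_accept p q = Sup {accept_prob p K | K. valid_rule p q K}"

end

theory Submission
  imports Defs
begin

definition nbr :: "'j set \<Rightarrow> ('i \<Rightarrow> 'j \<Rightarrow> bool) \<Rightarrow> 'i set \<Rightarrow> 'j set" where
  "nbr J E S = {j\<in>J. \<exists>i\<in>S. E i j}"

definition isflow :: "'i set \<Rightarrow> 'j set \<Rightarrow> ('i \<Rightarrow> real) \<Rightarrow> ('j \<Rightarrow> real) \<Rightarrow> ('i \<Rightarrow> 'j \<Rightarrow> bool) \<Rightarrow> ('i \<Rightarrow> 'j \<Rightarrow> real) \<Rightarrow> bool" where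
  "isflow I J a b E f \<longleftrightarrow> (\<forall>i j. 0 \<le> f i j) \<and> (\<forall>i j. f i j \<noteq> 0 \<longrightarrow> i\<in>I \<and> j\<in>J \<and> E i j)
     \<and> (\<forall>i\<in>I. sum (f i) J = a i) \<and> (\<forall>j\<in>J. (\<Sum>i\<in>I. f i j) \<le> b j)"

lemma nbr_mono: "S \<subseteq> T \<Longrightarrow> nbr J E S \<subseteq> nbr J E T"
  unfolding nbr_def by auto

lemma nbr_Un: "nbr J E (S \<union> T) = nbr J E S \<union> nbr J E T"
  unfolding nbr_def by auto

lemma nbr_sub: "nbr J E S \<subseteq> J"
  unfolding nbr_def by auto

lemma sum_upd:
  fixes f :: "'a \<Rightarrow> real"
  assumes "finite S"
  shows "sum (f(x := v)) S = sum f S - (if x \<in> S then f x - v else 0)"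
proof (cases "x \<in> S")
  case True
  have "sum (f(x := v)) S = v + sum (f(x := v)) (S - {x})" using sum.remove[OF assms True, of "f(x:=v)"] by simp
  also have "sum (f(x := v)) (S - {x}) = sum f (S - {x})" by (intro sum.cong) auto
  also have "sum f (S - {x}) = sum f S - f x" using sum.remove[OF assms True, of f] by simp
  finally show ?thesis using True by simp
next
  case False
  then have "sum (f(x := v)) S = sum f S" by (intro sum.cong) auto
  then show ?thesis using False by simp
qed

lemma hall_flow_aux:
  fixes I :: "'i set" and J :: "'j set"
  assumes fin: "finite I" "finite J"
  shows "card {(i,j). i\<in>I \<and> j\<in>J \<and> E i j} = n \<Longrightarrow> (\<forall>i\<in>I. 0 \<le> a i) \<Longrightarrow> (\<forall>j\<in>J. 0 \<le> b j)
    \<Longrightarrow> (\<forall>S\<subseteq>I. sum a S \<le> sum b (nbr J E S)) \<Longrightarrow> \<exists>f. isflow I J a b E f"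
proof (induction n arbitrary: a b E rule: less_induct)
  case (less n)
  have finE: "finite {(i,j). i\<in>I \<and> j\<in>J \<and> E i j}" for E :: "'i \<Rightarrow> 'j \<Rightarrow> bool"
    by (rule finite_subset[of _ "I \<times> J"]) (use fin in auto)
  have IH: "\<exists>f. isflow I J a' b' E' f"
    if "\<And>i j. E' i j \<Longrightarrow> E i j" "\<not> E' i0 j0" "i0 \<in> I" "j0 \<in> J" "E i0 j0"
       "\<forall>i\<in>I. 0 \<le> a' i" "\<forall>j\<in>J. 0 \<le> b' j" "\<forall>S\<subseteq>I. sum a' S \<le> sum b' (nbr J E' S)"
    for a' b' E' i0 j0
  proof -
    have "{(i,j). i\<in>I \<and> j\<in>J \<and> E' i j} \<subset> {(i,j). i\<in>I \<and> j\<in>J \<and> E i j}"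
    proof
      show "{(i,j). i\<in>I \<and> j\<in>J \<and> E' i j} \<subseteq> {(i,j). i\<in>I \<and> j\<in>J \<and> E i j}" using that(1) by auto
      have "(i0,j0) \<in> {(i,j). i\<in>I \<and> j\<in>J \<and> E i j}" "(i0,j0) \<notin> {(i,j). i\<in>I \<and> j\<in>J \<and> E' i j}" using that(2-5) by auto
      then show "{(i,j). i\<in>I \<and> j\<in>J \<and> E' i j} \<noteq> {(i,j). i\<in>I \<and> j\<in>J \<and> E i j}" by blast
    qed
    then have "card {(i,j). i\<in>I \<and> j\<in>J \<and> E' i j} < n"
      using less.prems(1) psubset_card_mono[OF finE] by blast
    then show ?thesis using less.IH that(6-8) by blast
  qed
  show ?case
  proof (cases "\<exists>i0\<in>I. \<exists>j0\<in>J. E i0 j0")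
    case False
    have "a i = 0" if "i \<in> I" for i
    proof -
      have "nbr J E {i} = {}" using False that unfolding nbr_def by auto
      then have "a i \<le> 0" using less.prems(4) that by (metis empty_subsetI insert_subset sum.empty sum.insert finite.emptyI empty_iff add.right_neutral)
      then show ?thesis using less.prems(2) that by force
    qed
    then have "isflow I J a b E (\<lambda>i j. 0)"
      unfolding isflow_def using less.prems(3) by auto
    then show ?thesis by blast
  next
    case True
    then obtain i0 j0 where ij: "i0 \<in> I" "j0 \<in> J" "E i0 j0" by blast
    define slack where "slack S = sum b (nbr J E S) - sum a S" for S
    define SS where "SS = {S. S \<subseteq> I \<and> i0 \<notin> S \<and> j0 \<in> nbr J E S}"
    define T where "T = insert (a i0) (insert (b j0) (slack ` SS))"
    define t where "t = Min T"
    have finT: "finite T" unfolding T_def SS_def using fin by auto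
    have tle: "t \<le> x" if "x \<in> T" for x using finT that unfolding t_def by auto
    have tin: "t \<in> T" unfolding t_def using finT by (intro Min_in) (auto simp: T_def)
    have slack_nn: "slack S \<ge> 0" if "S \<subseteq> I" for S using less.prems(4) that unfolding slack_def by auto
    have t0: "t \<ge> 0" using tin less.prems(2,3) ij slack_nn unfolding T_def SS_def by auto
    define a' where "a' = a(i0 := a i0 - t)"
    define b' where "b' = b(j0 := b j0 - t)"
    have suma': "sum a' S = sum a S - (if i0 \<in> S then t else 0)" if "S \<subseteq> I" for S
    proof -
      have "finite S" using that fin finite_subset by blast
      then show ?thesis unfolding a'_def using sum_upd[of S a i0 "a i0 - t"] by simp
    qed
    have sumb': "sum b' S = sum b S - (if j0 \<in> S then t else 0)" if "S \<subseteq> J" for S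
    proof -
      have "finite S" using that fin finite_subset by blast
      then show ?thesis unfolding b'_def using sum_upd[of S b j0 "b j0 - t"] by simp
    qed
    have a'nn: "\<forall>i\<in>I. 0 \<le> a' i" using less.prems(2) tle[of "a i0"] unfolding a'_def T_def by auto
    have b'nn: "\<forall>j\<in>J. 0 \<le> b' j" using less.prems(3) tle[of "b j0"] unfolding b'_def T_def by auto
    have hall': "sum a' S \<le> sum b' (nbr J E S)" if "S \<subseteq> I" for S
    proof -
      have h: "sum a S \<le> sum b (nbr J E S)" using less.prems(4) that by auto
      show ?thesis
      proof (cases "i0 \<notin> S \<and> j0 \<in> nbr J E S")
        case True
        then have "S \<in> SS" using that unfolding SS_def by auto
        then have "t \<le> slack S" using tle unfolding T_def by auto
        then show ?thesis using True suma'[OF that] sumb'[OF nbr_sub, of E S] unfolding slack_def by auto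
      next
        case False
        then show ?thesis using suma'[OF that] sumb'[OF nbr_sub, of E S] h t0 by auto
      qed
    qed
    have "\<exists>f'. isflow I J a' b' E f'"
    proof -
      consider "t = a i0" | "t = b j0" | S where "S \<in> SS" "t = slack S"
        using tin unfolding T_def by auto
      then show ?thesis
      proof cases
        case 1
        define E' where "E' i j = (E i j \<and> i \<noteq> i0)" for i j
        have "\<forall>S\<subseteq>I. sum a' S \<le> sum b' (nbr J E' S)"
        proof (intro allI impI)
          fix S assume S: "S \<subseteq> I"
          have "nbr J E' S = nbr J E (S - {i0})" unfolding nbr_def E'_def by auto
          moreover have "sum a' S = sum a' (S - {i0})"
          proof -
            have "a' i0 = 0" using 1 unfolding a'_def by simp
            then show ?thesis using finite_subset[OF S fin(1)] by (simp add: sum_diff1)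
          qed
          ultimately show "sum a' S \<le> sum b' (nbr J E' S)" using hall'[of "S - {i0}"] S by auto
        qed
        then obtain f' where "isflow I J a' b' E' f'"
          using IH[of E' i0 j0 a' b'] ij a'nn b'nn unfolding E'_def by auto
        then have "isflow I J a' b' E f'" unfolding isflow_def E'_def by auto
        then show ?thesis by blast
      next
        case 2
        define E' where "E' i j = (E i j \<and> j \<noteq> j0)" for i j
        have "\<forall>S\<subseteq>I. sum a' S \<le> sum b' (nbr J E' S)"
        proof (intro allI impI)
          fix S assume S: "S \<subseteq> I"
          have "nbr J E' S = nbr J E S - {j0}" unfolding nbr_def E'_def by auto
          moreover have "sum b' (nbr J E S) = sum b' (nbr J E S - {j0})"
          proof -
            have "b' j0 = 0" using 2 unfolding b'_def by simp
            then show ?thesis using finite_subset[OF nbr_sub[of J E S] fin(2)] by (simp add: sum_diff1)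
          qed
          ultimately show "sum a' S \<le> sum b' (nbr J E' S)" using hall'[of "S"] S by auto
        qed
        then obtain f' where "isflow I J a' b' E' f'"
          using IH[of E' i0 j0 a' b'] ij a'nn b'nn unfolding E'_def by auto
        then have "isflow I J a' b' E f'" unfolding isflow_def E'_def by auto
        then show ?thesis by blast
      next
        case 3
        have S: "S \<subseteq> I" "i0 \<notin> S" "j0 \<in> nbr J E S" using 3 unfolding SS_def by auto
        have crit: "sum a' S = sum b' (nbr J E S)"
          using 3 S suma'[OF S(1)] sumb'[OF nbr_sub, of E S] unfolding slack_def by auto
        define NS where "NS = nbr J E S"
        define E1 where "E1 i j = (E i j \<and> i \<in> S \<and> j \<in> NS)" for i j
        define a1 where "a1 i = (if i \<in> S then a' i else 0)" for i
        define b1 where "b1 j = (if j \<in> NS then b' j else 0)" for j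
        define E2 where "E2 i j = (E i j \<and> i \<notin> S \<and> j \<notin> NS)" for i j
        define a2 where "a2 i = (if i \<in> S then 0 else a' i)" for i
        define b2 where "b2 j = (if j \<in> NS then 0 else b' j)" for j
        have h1: "\<forall>U\<subseteq>I. sum a1 U \<le> sum b1 (nbr J E1 U)"
        proof (intro allI impI)
          fix U assume U: "U \<subseteq> I"
          have fU: "finite U" using U fin finite_subset by blast
          have n1: "nbr J E1 U = nbr J E (U \<inter> S)" unfolding nbr_def E1_def NS_def by auto
          have "sum a1 U = sum a' (U \<inter> S)" unfolding a1_def using fU
            by (simp add: sum.inter_restrict)
          moreover have "sum b1 (nbr J E1 U) = sum b' (nbr J E (U \<inter> S))"
            unfolding n1 b1_def NS_def using nbr_mono[of "U \<inter> S" S J E]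
            by (intro sum.cong) auto
          ultimately show "sum a1 U \<le> sum b1 (nbr J E1 U)" using hall'[of "U \<inter> S"] U by auto
        qed
        have h2: "\<forall>U\<subseteq>I. sum a2 U \<le> sum b2 (nbr J E2 U)"
        proof (intro allI impI)
          fix U assume U: "U \<subseteq> I"
          have fU: "finite U" using U fin finite_subset by blast
          have fS: "finite S" using S fin finite_subset by blast
          have fN: "finite (nbr J E V)" for V using fin nbr_sub finite_subset by metis
          have n2: "nbr J E2 U = nbr J E (U - S) - NS" unfolding nbr_def E2_def NS_def by auto
          have "sum a2 U = sum a' (U - S)" unfolding a2_def using fU
            by (simp add: sum.If_cases Diff_eq)
          moreover have "sum b2 (nbr J E2 U) = sum b' (nbr J E (U - S) - NS)"
            unfolding n2 b2_def by (intro sum.cong) auto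
          moreover have "sum a' (U - S) + sum a' S = sum a' ((U - S) \<union> S)"
            proof -
            have "(U - S) \<inter> S = {}" by blast
            then show ?thesis using fU fS sum.union_disjoint[of "U - S" S a'] by simp
          qed
          moreover have "sum b' (nbr J E ((U - S) \<union> S)) = sum b' (nbr J E (U - S) - NS) + sum b' NS"
            unfolding nbr_Un NS_def using fN
            by (metis Un_Diff_cancel2 Diff_disjoint inf_commute sum.union_disjoint finite_Diff)
          moreover have "sum a' ((U - S) \<union> S) \<le> sum b' (nbr J E ((U - S) \<union> S))"
            using hall' U S by auto
          ultimately show "sum a2 U \<le> sum b2 (nbr J E2 U)" using crit[folded NS_def] by linarith
        qed
        have "S \<subseteq> I" by (rule S(1))
        have nn: "\<forall>i\<in>I. 0 \<le> a1 i" "\<forall>j\<in>J. 0 \<le> b1 j" "\<forall>i\<in>I. 0 \<le> a2 i" "\<forall>j\<in>J. 0 \<le> b2 j"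
          using a'nn b'nn by (auto simp: a1_def b1_def a2_def b2_def)
        have e1: "\<not> E1 i0 j0" "\<And>i j. E1 i j \<Longrightarrow> E i j" unfolding E1_def using S by auto
        have e2: "\<not> E2 i0 j0" "\<And>i j. E2 i j \<Longrightarrow> E i j" unfolding E2_def NS_def using S by auto
        obtain f1 where f1: "isflow I J a1 b1 E1 f1"
          using IH[of E1 i0 j0 a1 b1, OF e1(2) e1(1) ij nn(1,2) h1] by blast
        obtain f2 where f2: "isflow I J a2 b2 E2 f2"
          using IH[of E2 i0 j0 a2 b2, OF e2(2) e2(1) ij nn(3,4) h2] by blast
        have A: "\<forall>i j. 0 \<le> f1 i j + f2 i j" using f1 f2 unfolding isflow_def by (simp add: add_nonneg_nonneg)
        have B: "\<forall>i j. f1 i j + f2 i j \<noteq> 0 \<longrightarrow> i \<in> I \<and> j \<in> J \<and> E i j"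
        proof (intro allI impI)
          fix i j assume "f1 i j + f2 i j \<noteq> 0"
          then have "f1 i j \<noteq> 0 \<or> f2 i j \<noteq> 0" by auto
          then show "i \<in> I \<and> j \<in> J \<and> E i j" using f1 f2 unfolding isflow_def E1_def E2_def by blast
        qed
        have C: "\<forall>i\<in>I. (\<Sum>j\<in>J. f1 i j + f2 i j) = a' i"
          using f1 f2 unfolding isflow_def a1_def a2_def by (simp add: sum.distrib)
        have D: "\<forall>j\<in>J. (\<Sum>i\<in>I. f1 i j + f2 i j) \<le> b' j"
        proof
          fix j assume j: "j \<in> J"
          have "(\<Sum>i\<in>I. f1 i j) \<le> b1 j" "(\<Sum>i\<in>I. f2 i j) \<le> b2 j" using f1 f2 j unfolding isflow_def by auto
          moreover have "b1 j + b2 j = b' j" unfolding b1_def b2_def by auto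
          ultimately show "(\<Sum>i\<in>I. f1 i j + f2 i j) \<le> b' j" by (simp add: sum.distrib)
        qed
        have "isflow I J a' b' E (\<lambda>i j. f1 i j + f2 i j)"
          unfolding isflow_def using A B C D by blast
        then show ?thesis by blast
      qed
    qed
    then obtain f' where f': "isflow I J a' b' E f'" by blast
    define f where "f i j = f' i j + (if i = i0 \<and> j = j0 then t else 0)" for i j
    have A: "\<forall>i j. 0 \<le> f i j" using f' t0 unfolding isflow_def f_def by simp
    have B: "\<forall>i j. f i j \<noteq> 0 \<longrightarrow> i \<in> I \<and> j \<in> J \<and> E i j"
      using f' ij unfolding isflow_def f_def by (auto split: if_splits)
    have C: "\<forall>i\<in>I. sum (f i) J = a i"
    proof
      fix i assume i: "i \<in> I"
      have "sum (f i) J = sum (f' i) J + (if i = i0 then t else 0)"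
        unfolding f_def using fin ij by (simp add: sum.distrib)
      then show "sum (f i) J = a i" using f' i unfolding isflow_def a'_def by auto
    qed
    have D: "\<forall>j\<in>J. (\<Sum>i\<in>I. f i j) \<le> b j"
    proof
      fix j assume j: "j \<in> J"
      have "(\<Sum>i\<in>I. f i j) = (\<Sum>i\<in>I. f' i j) + (if j = j0 then t else 0)"
        unfolding f_def using fin ij by (simp add: sum.distrib)
      moreover have "(\<Sum>i\<in>I. f' i j) \<le> b' j" using f' j unfolding isflow_def by auto
      ultimately show "(\<Sum>i\<in>I. f i j) \<le> b j" unfolding b'_def by (auto split: if_splits)
    qed
    have "isflow I J a b E f" unfolding isflow_def using A B C D by blast
    then show ?thesis by blast
  qed
qed


lemma sum_option_UNIV:
  fixes g :: "'a::finite option \<Rightarrow> real"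
  shows "sum g UNIV = g None + (\<Sum>z\<in>UNIV. g (Some z))"
proof -
  have "sum g UNIV = sum g (insert None (range Some))" by (simp add: UNIV_option_conv[symmetric])
  also have "\<dots> = g None + sum g (range Some)" by (subst sum.insert) auto
  also have "sum g (range Some) = (\<Sum>z\<in>UNIV. g (Some z))" by (subst sum.reindex) auto
  finally show ?thesis .
qed

lemma sum_pmf_UNIV: "(\<Sum>x\<in>UNIV. pmf (p::'a::finite pmf) x) = 1"
  by (rule sum_pmf_eq_1) auto

lemma double_sum_pp:
  fixes p :: "'a::finite pmf"
  shows "(\<Sum>x\<in>A. \<Sum>y\<in>A. pmf p x * pmf p y) = (\<Sum>s\<in>A. pmf p s)^2"
  by (simp add: sum_product power2_eq_square)

lemma formula_eq:
  fixes p q :: "'a::finite pmf"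
  shows "(\<Sum>s\<in>A. pmf q s) + (\<Sum>s\<in>UNIV - A. pmf p s) ^ 2
               + 2 * (\<Sum>s\<in>A. pmf p s) * (\<Sum>s\<in>UNIV - A. pmf p s)
       = (\<Sum>s\<in>A. pmf q s) + 1 - (\<Sum>s\<in>A. pmf p s)^2"
proof -
  have h: "(\<Sum>s\<in>UNIV - A. pmf p s) = 1 - (\<Sum>s\<in>A. pmf p s)"
    using sum_diff[of UNIV A "pmf p"] sum_pmf_UNIV[of p] by simp
  show ?thesis unfolding h power2_eq_square by (simp add: algebra_simps)
qed

lemma upper_bound:
  fixes p q :: "'a::finite pmf"
  assumes "valid_rule p q K"
  shows "accept_prob p K \<le> (\<Sum>s\<in>A. pmf q s) + 1 - (\<Sum>s\<in>A. pmf p s)^2"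
proof -
  let ?P = "\<lambda>x y. measure_pmf.prob (K x y)"
  let ?ind = "\<lambda>x y. (if x \<in> A \<and> y \<in> A then 1 else 0::real)"
  have pt: "?P x y {x, y} \<le> ?P x y A + (1 - ?ind x y)" for x y
  proof -
    have "?P x y {x,y} \<le> ?P x y (A \<union> {x,y})"
      by (intro measure_pmf.finite_measure_mono) auto
    also have "\<dots> = ?P x y A + ?P x y ({x,y} - A)"
      by (rule measure_pmf.finite_measure_Union') auto
    also have "?P x y ({x,y} - A) \<le> 1 - ?ind x y"
      by (cases "x \<in> A \<and> y \<in> A") (auto simp: measure_pmf.prob_le_1)
    finally show ?thesis by simp
  qed
  have "accept_prob p K \<le> (\<Sum>x\<in>UNIV. \<Sum>y\<in>UNIV. pmf p x * pmf p y * (?P x y A + (1 - ?ind x y)))"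
    unfolding accept_prob_def
    by (intro sum_mono mult_left_mono pt) auto
  also have "\<dots> = (\<Sum>x\<in>UNIV. \<Sum>y\<in>UNIV. pmf p x * pmf p y * ?P x y A)
      + ((\<Sum>x\<in>UNIV. \<Sum>y\<in>UNIV. pmf p x * pmf p y) - (\<Sum>x\<in>UNIV. \<Sum>y\<in>UNIV. pmf p x * pmf p y * ?ind x y))"
    by (simp add: algebra_simps sum.distrib sum_subtractf)
  also have "(\<Sum>x\<in>UNIV. \<Sum>y\<in>UNIV. pmf p x * pmf p y * ?P x y A) = (\<Sum>z\<in>A. pmf q z)"
  proof -
    have "(\<Sum>x\<in>UNIV. \<Sum>y\<in>UNIV. pmf p x * pmf p y * ?P x y A)
        = (\<Sum>x\<in>UNIV. \<Sum>y\<in>UNIV. \<Sum>z\<in>A. pmf p x * pmf p y * pmf (K x y) z)"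
      by (simp add: measure_measure_pmf_finite sum_distrib_left)
    also have "\<dots> = (\<Sum>z\<in>A. output_prob p K z)"
      unfolding output_prob_def by (simp add: sum.swap[of _ A])
    also have "\<dots> = (\<Sum>z\<in>A. pmf q z)" using assms unfolding valid_rule_def by simp
    finally show ?thesis .
  qed
  also have "(\<Sum>x\<in>UNIV. \<Sum>y\<in>UNIV. pmf p x * pmf p y) = 1"
    using double_sum_pp[where A=UNIV and p=p] sum_pmf_UNIV[of p] by simp
  also have "(\<Sum>x\<in>UNIV. \<Sum>y\<in>UNIV. pmf p x * pmf p y * ?ind x y) = (\<Sum>s\<in>A. pmf p s)^2"
  proof -
    have "(\<Sum>x\<in>UNIV. \<Sum>y\<in>UNIV. pmf p x * pmf p y * ?ind x y)
       = (\<Sum>x\<in>UNIV. \<Sum>y\<in>UNIV. (if x \<in> A then pmf p x else 0) * (if y \<in> A then pmf p y else 0))"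
      by (intro sum.cong) auto
    also have "\<dots> = (\<Sum>x\<in>UNIV. (if x \<in> A then pmf p x else 0))^2"
      by (simp add: sum_product power2_eq_square)
    also have "(\<Sum>x\<in>UNIV. (if x \<in> A then pmf p x else 0)) = (\<Sum>s\<in>A. pmf p s)"
      by (simp add: sum.If_cases)
    finally show ?thesis .
  qed
  finally show ?thesis by simp
qed


lemma sum_pair_UNIV:
  fixes g :: "'a::finite \<times> 'b::finite \<Rightarrow> real"
  shows "(\<Sum>xy\<in>UNIV. g xy) = (\<Sum>x\<in>UNIV. \<Sum>y\<in>UNIV. g (x,y))"
  by (simp add: sum.cartesian_product)

lemma achieve:
  fixes p q :: "'a::finite pmf"
  shows "\<exists>K. valid_rule p q K \<and>
    Min ((\<lambda>A. (\<Sum>s\<in>A. pmf q s) + (\<Sum>s\<in>UNIV - A. pmf p s) ^ 2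
               + 2 * (\<Sum>s\<in>A. pmf p s) * (\<Sum>s\<in>UNIV - A. pmf p s)) ` (UNIV :: 'a set set))
    \<le> accept_prob p K"
proof -
  define pa :: "'a \<times> 'a \<Rightarrow> real" where "pa xy = pmf p (fst xy) * pmf p (snd xy)" for xy
  define N0 :: "('a \<times> 'a) set \<Rightarrow> 'a set" where "N0 S = {z. \<exists>xy\<in>S. z = fst xy \<or> z = snd xy}" for S
  define E :: "'a \<times> 'a \<Rightarrow> 'a option \<Rightarrow> bool" where
    "E xy j = (case j of None \<Rightarrow> True | Some z \<Rightarrow> z = fst xy \<or> z = snd xy)" for xy j
  define val where "val S = sum pa S - sum (pmf q) (N0 S)" for S
  define \<delta> where "\<delta> = Max (val ` UNIV)"
  define b :: "'a option \<Rightarrow> real" where "b j = (case j of None \<Rightarrow> \<delta> | Some z \<Rightarrow> pmf q z)" for j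
  have pann: "0 \<le> pa xy" for xy unfolding pa_def by simp
  have pa1: "(\<Sum>xy\<in>UNIV. pa xy) = 1"
    unfolding sum_pair_UNIV pa_def using double_sum_pp[where A=UNIV and p=p] sum_pmf_UNIV[of p] by simp
  have val_le: "val S \<le> \<delta>" for S unfolding \<delta>_def by (rule Max_ge) auto
  have \<delta>nn: "0 \<le> \<delta>" using val_le[of "{}"] unfolding val_def N0_def by simp
  have hall: "\<forall>S\<subseteq>UNIV. sum pa S \<le> sum b (nbr UNIV E S)"
  proof (intro allI impI)
    fix S :: "('a \<times> 'a) set"
    show "sum pa S \<le> sum b (nbr UNIV E S)"
    proof (cases "S = {}")
      case True then show ?thesis by (simp add: nbr_def)
    next
      case False
      have "nbr UNIV E S = insert None (Some ` N0 S)"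
      proof (rule set_eqI)
        fix j :: "'a option"
        show "j \<in> nbr UNIV E S \<longleftrightarrow> j \<in> insert None (Some ` N0 S)"
          using False by (cases j) (auto simp: nbr_def E_def N0_def)
      qed
      then have "sum b (nbr UNIV E S) = \<delta> + sum (pmf q) (N0 S)"
        by (simp add: sum.reindex b_def)
      then show ?thesis using val_le[of S] unfolding val_def by simp
    qed
  qed
  have bnn: "\<forall>j\<in>UNIV. 0 \<le> b j" using \<delta>nn by (auto simp: b_def split: option.splits)
  obtain f where f: "isflow UNIV UNIV pa b E f"
    using hall_flow_aux[of "UNIV :: ('a \<times> 'a) set" "UNIV :: 'a option set" E _ pa b, OF _ _ refl _ bnn hall] pann
    by auto
  have fnn: "0 \<le> f i j" for i j using f unfolding isflow_def by blast
  have fsupp: "f xy (Some z) = 0" if "z \<noteq> fst xy" "z \<noteq> snd xy" for xy z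
  proof -
    have "f xy (Some z) \<noteq> 0 \<longrightarrow> E xy (Some z)" using f unfolding isflow_def by blast
    then show ?thesis using that unfolding E_def by auto
  qed
  define F where "F z = (\<Sum>xy\<in>UNIV. f xy (Some z))" for z
  define r where "r xy = f xy None" for xy
  define d where "d z = pmf q z - F z" for z
  define D where "D = (\<Sum>z\<in>UNIV. d z)"
  have frow: "r xy + (\<Sum>z\<in>UNIV. f xy (Some z)) = pa xy" for xy
  proof -
    have "sum (f xy) UNIV = pa xy" using f unfolding isflow_def by blast
    then show ?thesis unfolding r_def by (simp add: sum_option_UNIV)
  qed
  have rle: "(\<Sum>xy\<in>UNIV. r xy) \<le> \<delta>"
  proof -
    have "(\<Sum>i\<in>UNIV. f i None) \<le> b None" using f unfolding isflow_def by blast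
    then show ?thesis unfolding r_def b_def by simp
  qed
  have Fle: "F z \<le> pmf q z" for z
  proof -
    have "(\<Sum>i\<in>UNIV. f i (Some z)) \<le> b (Some z)" using f unfolding isflow_def by blast
    then show ?thesis unfolding F_def b_def by simp
  qed
  have rnn: "0 \<le> r xy" for xy unfolding r_def by (rule fnn)
  have dnn: "0 \<le> d z" for z using Fle[of z] unfolding d_def by simp
  have Dnn: "0 \<le> D" unfolding D_def by (intro sum_nonneg) (simp add: dnn)
  have sumr: "(\<Sum>xy\<in>UNIV. r xy) = D"
  proof -
    have "(\<Sum>xy\<in>UNIV. r xy) = (\<Sum>xy\<in>UNIV. pa xy - (\<Sum>z\<in>UNIV. f xy (Some z)))"
      using frow by (intro sum.cong refl) (simp add: eq_diff_eq)
    also have "\<dots> = 1 - (\<Sum>z\<in>UNIV. F z)"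
    proof -
      have "(\<Sum>xy\<in>UNIV. \<Sum>z\<in>UNIV. f xy (Some z)) = (\<Sum>z\<in>UNIV. F z)" unfolding F_def by (rule sum.swap)
      then show ?thesis by (simp only: sum_subtractf pa1)
    qed
    also have "\<dots> = D" unfolding D_def d_def by (simp add: sum_subtractf sum_pmf_UNIV)
    finally show ?thesis .
  qed
  define m where "m xy z = f xy (Some z) + r xy * d z / D" for xy z
  have mnn: "0 \<le> m xy z" for xy z unfolding m_def using fnn rnn dnn Dnn by simp
  have mrow: "(\<Sum>z\<in>UNIV. m xy z) = pa xy" for xy
  proof (cases "D = 0")
    case True
    then have "sum r UNIV = 0" using sumr by simp
    then have "r xy = 0" using rnn sum_nonneg_eq_0_iff[of UNIV r, OF finite_class.finite_UNIV] by blast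
    then show ?thesis unfolding m_def using frow[of xy] True by simp
  next
    case False
    have "(\<Sum>z\<in>UNIV. m xy z) = (\<Sum>z\<in>UNIV. f xy (Some z)) + r xy * D / D"
      unfolding m_def D_def by (simp add: sum.distrib sum_distrib_left sum_divide_distrib[symmetric])
    then show ?thesis using frow[of xy] False by simp
  qed
  have mcol: "(\<Sum>xy\<in>UNIV. m xy z) = pmf q z" for z
  proof (cases "D = 0")
    case True
    then have "sum d UNIV = 0" using D_def by simp
    then have "d z = 0" using dnn sum_nonneg_eq_0_iff[of UNIV d, OF finite_class.finite_UNIV] by blast
    then show ?thesis unfolding m_def using True by (simp add: F_def[symmetric] d_def)
  next
    case False
    have "(\<Sum>xy\<in>UNIV. m xy z) = F z + D * d z / D"
      unfolding m_def F_def by (simp add: sum.distrib sum_distrib_right[symmetric] sum_divide_distrib[symmetric] sumr)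
    then show ?thesis using False unfolding d_def by simp
  qed
  have m0: "m xy z = 0" if "pa xy = 0" for xy z
  proof -
    have "(\<Sum>z\<in>UNIV. m xy z) = 0" using mrow that by simp
    then show ?thesis using mnn sum_nonneg_eq_0_iff[of UNIV "m xy", OF finite_class.finite_UNIV] by blast
  qed
  define K where "K x y = (if pa (x,y) = 0 then q else embed_pmf (\<lambda>z. m (x,y) z / pa (x,y)))" for x y
  have key: "pa (x,y) * pmf (K x y) z = m (x,y) z" for x y z
  proof (cases "pa (x,y) = 0")
    case True then show ?thesis using m0 unfolding K_def by simp
  next
    case False
    let ?g = "\<lambda>z. m (x,y) z / pa (x,y)"
    have gnn: "\<And>z. 0 \<le> ?g z" using mnn pann by simp
    have "(\<Sum>z\<in>UNIV. ?g z) = 1" using mrow[of "(x,y)"] False by (simp add: sum_divide_distrib[symmetric])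
    then have "(\<integral>\<^sup>+z. ennreal (?g z) \<partial>count_space UNIV) = 1"
      using gnn by (simp add: nn_integral_count_space_finite sum_ennreal)
    then have "pmf (embed_pmf ?g) z = ?g z" using gnn by (intro pmf_embed_pmf) auto
    then show ?thesis using False unfolding K_def by simp
  qed
  have valid: "valid_rule p q K"
    unfolding valid_rule_def output_prob_def
  proof
    fix z
    have "(\<Sum>x\<in>UNIV. \<Sum>y\<in>UNIV. pmf p x * pmf p y * pmf (K x y) z) = (\<Sum>x\<in>UNIV. \<Sum>y\<in>UNIV. m (x,y) z)"
      using key unfolding pa_def by simp
    also have "\<dots> = pmf q z" using mcol[of z] unfolding sum_pair_UNIV by simp
    finally show "(\<Sum>x\<in>UNIV. \<Sum>y\<in>UNIV. pmf p x * pmf p y * pmf (K x y) z) = pmf q z" .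
  qed
  have acc: "1 - \<delta> \<le> accept_prob p K"
  proof -
    have "accept_prob p K = (\<Sum>x\<in>UNIV. \<Sum>y\<in>UNIV. \<Sum>z\<in>{x,y}. m (x,y) z)"
      unfolding accept_prob_def using key unfolding pa_def
      by (simp add: measure_measure_pmf_finite sum_distrib_left)
    also have "\<dots> \<ge> (\<Sum>x\<in>UNIV. \<Sum>y\<in>UNIV. \<Sum>z\<in>{x,y}. f (x,y) (Some z))"
      unfolding m_def using rnn dnn Dnn by (intro sum_mono) simp
    also have "(\<Sum>x\<in>UNIV. \<Sum>y\<in>UNIV. \<Sum>z\<in>{x,y}. f (x,y) (Some z)) = (\<Sum>x\<in>UNIV. \<Sum>y\<in>UNIV. \<Sum>z\<in>UNIV. f (x,y) (Some z))"
      by (intro sum.cong refl sum.mono_neutral_left) (auto intro: fsupp)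
    also have "\<dots> = (\<Sum>x\<in>UNIV. \<Sum>y\<in>UNIV. pa (x,y) - r (x,y))"
      using frow by (intro sum.cong refl) (simp add: eq_diff_eq add.commute)
    also have "\<dots> = 1 - (\<Sum>xy\<in>UNIV. r xy)"
      using pa1 unfolding sum_pair_UNIV by (simp add: sum_subtractf)
    finally show ?thesis using rle by simp
  qed
  have "\<delta> \<in> val ` UNIV" unfolding \<delta>_def by (rule Max_in) auto
  then obtain S0 where S0: "\<delta> = val S0" by blast
  define A where "A = N0 S0"
  have "sum pa S0 \<le> sum pa (A \<times> A)"
    by (rule sum_mono2) (force simp: A_def N0_def pann)+
  also have "sum pa (A \<times> A) = (\<Sum>s\<in>A. pmf p s)^2"
    using double_sum_pp[where A=A and p=p] unfolding pa_def by (simp add: sum.cartesian_product case_prod_beta')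
  finally have paS0: "sum pa S0 \<le> (\<Sum>s\<in>A. pmf p s)^2" .
  let ?h = "\<lambda>A. (\<Sum>s\<in>A. pmf q s) + (\<Sum>s\<in>UNIV - A. pmf p s) ^ 2
               + 2 * (\<Sum>s\<in>A. pmf p s) * (\<Sum>s\<in>UNIV - A. pmf p s)"
  have "Min (?h ` UNIV) \<le> ?h A" by (rule Min_le) auto
  also have "\<dots> = (\<Sum>s\<in>A. pmf q s) + 1 - (\<Sum>s\<in>A. pmf p s)^2" by (rule formula_eq)
  also have "\<dots> \<le> 1 - \<delta>" using S0 paS0 unfolding val_def A_def by simp
  also have "\<dots> \<le> accept_prob p K" by (rule acc)
  finally show ?thesis using valid by blast
qed

theorem theorem3:
  fixes p q :: "'a::finite pmf"
  shows "opt_accept p q =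
    Min ((\<lambda>A. (\<Sum>s\<in>A. pmf q s) + (\<Sum>s\<in>UNIV - A. pmf p s) ^ 2
               + 2 * (\<Sum>s\<in>A. pmf p s) * (\<Sum>s\<in>UNIV - A. pmf p s)) ` (UNIV :: 'a set set))"
proof -
  let ?h = "\<lambda>A. (\<Sum>s\<in>A. pmf q s) + (\<Sum>s\<in>UNIV - A. pmf p s) ^ 2
               + 2 * (\<Sum>s\<in>A. pmf p s) * (\<Sum>s\<in>UNIV - A. pmf p s)"
  let ?M = "Min (?h ` (UNIV :: 'a set set))"
  have "?M \<in> ?h ` UNIV" by (rule Min_in) auto
  then obtain A0 where A0: "?M = ?h A0" by blast
  have M: "?M = (\<Sum>s\<in>A0. pmf q s) + 1 - (\<Sum>s\<in>A0. pmf p s)^2"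
    by (rule trans[OF A0 formula_eq])
  have ub: "accept_prob p K \<le> ?M" if "valid_rule p q K" for K
    unfolding M by (rule upper_bound[OF that])
  obtain K0 where K0: "valid_rule p q K0" "?M \<le> accept_prob p K0" using achieve[of p q] by blast
  have eq: "accept_prob p K0 = ?M" using ub[OF K0(1)] K0(2) by (rule order.antisym)
  define X where "X = {accept_prob p K |K. valid_rule p q K}"
  have mem: "accept_prob p K0 \<in> X" unfolding X_def using K0(1) by blast
  have upper: "x \<le> accept_prob p K0" if "x \<in> X" for x
  proof -
    obtain K where K: "x = accept_prob p K" "valid_rule p q K" using \<open>x \<in> X\<close> unfolding X_def by blast
    show ?thesis unfolding K(1) eq by (rule ub[OF K(2)])
  qed
  have "Sup X = accept_prob p K0" by (rule cSup_eq_maximum[OF mem upper])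
  then show ?thesis unfolding opt_accept_def X_def[symmetric] eq .
qed

end
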